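(* Consider the looped Markov chain $\mathcal{G}'$ described in the context, with parameters $r\ge1$, $p,p_c\in[0,1]$, and let $\nu=p\,p_c$ with $\nu\cdot r<1$. Let $\alpha=\alpha_1\cdots\alpha_t\in\{1,\ldots,r\}^*$ ($t\ge0$) and $1\le i\le r$. Then the mean hitting time of $s_i^\alpha$ from $\sharp$ is $$m_\sharp(s_i^\alpha)=\nu^{-t}+(i-1)\Delta+\sum_{k=1}^{t}\frac{1+p+(\alpha_k-1)\Delta+(1-\nu)\sum_{s=1}^{k}(r-\alpha_s)\Delta}{\nu^{t+1-k}}.$$
   Context: Fix an integer $r\ge1$ and probabilities $p,p_c\in[0,1]$. Words $\alpha\in\{1,\ldots,r\}^*$ (finite sequences, $\varepsilon$ empty word, $\alpha\cdot i$ concatenation, $r^k$ the word of $k$ letters $r$) are called blocks. The Markov chain $\mathcal{G}'$ has the countable state space $\{s_i^\alpha, c_i^\alpha : 1\le i\le r,\ \alpha\in\{1,\ldots,r\}^*\}\cup\{\sharp\}$, initial state $\sharp$, and transition probabilities (all unlisted ones are $0$): $p(\sharp,s_1^\varepsilon)=1$; $p(s_i^\alpha,c_i^\alpha)=p$ for $1\le i\le r$; $p(s_i^\alpha,s_{i+1}^\alpha)=1-p$ for $1\le i<r$; $p(c_i^\alpha,s_1^{\alpha\cdot i})=p_c$ for $1\le i\le r$; $p(c_i^\alpha,s_{i+1}^\alpha)=1-p_c$ for $1\le i<r$; for every word $\gamma=\beta\cdot i\cdot r^k$ with $1\le i<r$, $k\ge0$: $p(s_r^\gamma,s_{i+1}^\beta)=1-p$,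 $p(c_r^\gamma,s_{i+1}^\beta)=1-p_c$; for every $\gamma\in r^*$ (including $\varepsilon$): $p(s_r^\gamma,\sharp)=1-p$, $p(c_r^\gamma,\sharp)=1-p_c$. (This is the chain of the guard strategy with $p_1=\cdots=p_r=p$, in which the terminal state is merged into $\sharp$ so that generation is repeated forever, and $\sharp$ always proceeds to $s_1^\varepsilon$.) For states $x,y$, $m_x(y)$ denotes the expected value of $\inf\{n\ge0: X_n=y\}$ for the chain $(X_n)$ started at $X_0=x$. Let $C:=m_{s_1^\varepsilon}(\sharp)$ and $\Delta:=1+p(1+p_c C)$. *)

theory Defs
  imports "HOL-Probability.Probability"
begin

text \<open>States of the chain G': Sharp, S i alpha (= s_i^alpha), C i alpha (= c_i^alpha).
  Blocks are lists of letters in 1..r; alpha . i is  alpha @ [i].\<close>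
datatype state = Sharp | S nat "nat list" | C nat "nat list"

text \<open>Target of the (1-p) / (1-p_c) move out of s_r^gamma / c_r^gamma:
  for gamma = beta . i . r^k with i < r go to s_{i+1}^beta; for gamma in r^* go to Sharp.\<close>
definition up :: "nat \<Rightarrow> nat list \<Rightarrow> state" where
  "up r \<gamma> = (let \<delta> = rev (dropWhile (\<lambda>x. x = r) (rev \<gamma>))
               in if \<delta> = [] then Sharp else S (last \<delta> + 1) (butlast \<delta>))"

text \<open>Transition kernel of G'. States with an index outside 1..r are unreachable;
  they are sent to Sharp arbitrarily.\<close>
fun K :: "nat \<Rightarrow> real \<Rightarrow> real \<Rightarrow> state \<Rightarrow> state pmf" where
  "K r p pc Sharp = return_pmf (S 1 [])"
| "K r p pc (S i \<alpha>) =
     (if 1 \<le> i \<and> i < r then map_pmf (\<lambda>b. if b then C i \<alpha> else S (i+1) \<alpha>) (bernoulli_pmf p)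
      else if i = r \<and> 1 \<le> i then map_pmf (\<lambda>b. if b then C i \<alpha> else up r \<alpha>) (bernoulli_pmf p)
      else return_pmf Sharp)"
| "K r p pc (C i \<alpha>) =
     (if 1 \<le> i \<and> i < r then map_pmf (\<lambda>b. if b then S 1 (\<alpha> @ [i]) else S (i+1) \<alpha>) (bernoulli_pmf pc)
      else if i = r \<and> 1 \<le> i then map_pmf (\<lambda>b. if b then S 1 (\<alpha> @ [i]) else up r \<alpha>) (bernoulli_pmf pc)
      else return_pmf Sharp)"

fun paths :: "nat \<Rightarrow> real \<Rightarrow> real \<Rightarrow> state \<Rightarrow> nat \<Rightarrow> state list pmf" where
  "paths r p pc x 0 = return_pmf [x]"
| "paths r p pc x (Suc n) =
     paths r p pc x n \<bind> (\<lambda>xs. map_pmf (\<lambda>z. xs @ [z]) (K r p pc (last xs)))"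

text \<open>Mean hitting time m_x(y) = E[inf{n \<ge> 0. X_n = y}] (value in [0,\<infinity>]),
  computed by the tail-sum formula E[T] = \<Sum>_{n\<ge>0} P(T > n),
  where T > n iff none of X_0..X_n equals y.\<close>
definition mht :: "nat \<Rightarrow> real \<Rightarrow> real \<Rightarrow> state \<Rightarrow> state \<Rightarrow> ennreal" where
  "mht r p pc x y = (\<Sum>n. ennreal (measure_pmf.prob (paths r p pc x n) {xs. y \<notin> set xs}))"

end

theory Submission
  imports Defs
begin


lemma paths_nonempty: "xs \<in> set_pmf (paths r p pc x n) \<Longrightarrow> xs \<noteq> []"
  by (induction n arbitrary: xs) auto

lemma paths_first: "paths r p pc x (Suc n) =
   bind_pmf (K r p pc x) (\<lambda>z. map_pmf (\<lambda>ys. x # ys) (paths r p pc z n))"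
proof (induction n)
  case 0
  then show ?case by (simp add: bind_return_pmf map_pmf_def)
next
  case (Suc n)
  have "paths r p pc x (Suc (Suc n)) = bind_pmf (paths r p pc x (Suc n))
          (\<lambda>xs. map_pmf (\<lambda>z. xs @ [z]) (K r p pc (last xs)))" by (rule paths.simps(2))
  also have "\<dots> = bind_pmf (K r p pc x) (\<lambda>z. bind_pmf (map_pmf ((#) x) (paths r p pc z n))
          (\<lambda>xs. map_pmf (\<lambda>z. xs @ [z]) (K r p pc (last xs))))"
    by (simp only: Suc bind_assoc_pmf bind_map_pmf)
  also have "\<dots> = bind_pmf (K r p pc x) (\<lambda>z. map_pmf ((#) x) (paths r p pc z (Suc n)))"
  proof (intro bind_pmf_cong refl)
    fix z
    show "bind_pmf (map_pmf ((#) x) (paths r p pc z n))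
          (\<lambda>xs. map_pmf (\<lambda>z. xs @ [z]) (K r p pc (last xs))) = map_pmf ((#) x) (paths r p pc z (Suc n))"
      unfolding bind_map_pmf paths.simps map_bind_pmf
      by (intro bind_pmf_cong refl) (auto simp: pmf.map_comp o_def dest: paths_nonempty)
  qed
  finally show ?case .
qed

lemma suminf_swap_ennreal: "(\<Sum>n. \<Sum>j. h j n :: ennreal) = (\<Sum>j. \<Sum>n. h j n)"
proof -
  have "(\<Sum>n. \<Sum>j. h j n) = (\<integral>\<^sup>+n. (\<Sum>j. h j n) \<partial>count_space UNIV)"
    by (simp add: nn_integral_count_space_nat)
  also have "\<dots> = (\<Sum>j. \<integral>\<^sup>+n. h j n \<partial>count_space UNIV)"
    by (rule nn_integral_suminf) auto
  also have "\<dots> = (\<Sum>j. \<Sum>n. h j n)" by (simp add: nn_integral_count_space_nat)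
  finally show ?thesis .
qed

lemma cauchy_ennreal: "(\<Sum>n. \<Sum>j\<le>n. f j * g (n - j) :: ennreal) = (\<Sum>j. f j) * (\<Sum>m. g m)"
proof -
  have "(\<Sum>n. \<Sum>j\<le>n. f j * g (n - j)) = (\<Sum>n. \<Sum>j. (if j \<le> n then f j * g (n - j) else 0))"
  proof (intro suminf_cong)
    fix n :: nat
    show "(\<Sum>j\<le>n. f j * g (n - j)) = (\<Sum>j. (if j \<le> n then f j * g (n - j) else 0))"
      by (subst suminf_finite[where N="{..n}"]) auto
  qed
  also have "\<dots> = (\<Sum>j. \<Sum>n. (if j \<le> n then f j * g (n - j) else 0))"
    by (rule suminf_swap_ennreal)
  also have "\<dots> = (\<Sum>j. f j * (\<Sum>m. g m))"
  proof (intro suminf_cong)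
    fix j
    have "(\<Sum>n. (if j \<le> n then f j * g (n - j) else 0)) =
       (\<Sum>m. (if j \<le> m + j then f j * g (m + j - j) else 0)) + (\<Sum>n<j. (if j \<le> n then f j * g (n - j) else 0))"
      by (rule suminf_offset) auto
    then show "(\<Sum>n. (if j \<le> n then f j * g (n - j) else 0)) = f j * (\<Sum>m. g m)" by simp
  qed
  also have "\<dots> = (\<Sum>j. f j) * (\<Sum>m. g m)" by simp
  finally show ?thesis .
qed

lemma cauchy_ennreal_le: "(\<Sum>n<(N::nat). \<Sum>j\<le>n. f j * g (n - j) :: ennreal) \<le> (\<Sum>j<N. f j) * (\<Sum>m<N. g m)"
proof -
  have "(\<Sum>n<N. \<Sum>j\<le>n. f j * g (n - j)) = (\<Sum>(j,m)\<in>{(j,m). j+m<N}. f j * g m)"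
    by (rule sum.triangle_reindex[symmetric])
  also have "\<dots> \<le> (\<Sum>(j,m)\<in>{..<N}\<times>{..<N}. f j * g m)"
    by (intro sum_mono2) auto
  also have "\<dots> = (\<Sum>j<N. f j) * (\<Sum>m<N. g m)"
    by (simp add: sum.cartesian_product[symmetric] sum_product)
  finally show ?thesis .
qed

context
  fixes r :: nat and p pc :: real
begin

abbreviation KK where "KK x \<equiv> measure_pmf (K r p pc x)"

fun avoid :: "state \<Rightarrow> nat \<Rightarrow> state \<Rightarrow> ennreal" where
  "avoid y 0 x = (if x = y then 0 else 1)"
| "avoid y (Suc n) x = (if x = y then 0 else \<integral>\<^sup>+ z. avoid y n z \<partial>KK x)"

lemma avoid_prob: "ennreal (measure_pmf.prob (paths r p pc x n) {xs. y \<notin> set xs}) = avoid y n x"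
proof (induction n arbitrary: x)
  case 0
  then show ?case by (auto simp: measure_pmf.emeasure_eq_measure[symmetric] indicator_def)
next
  case (Suc n)
  have "ennreal (measure_pmf.prob (paths r p pc x (Suc n)) {xs. y \<notin> set xs})
      = emeasure (paths r p pc x (Suc n)) {xs. y \<notin> set xs}"
    by (simp add: measure_pmf.emeasure_eq_measure)
  also have "\<dots> = \<integral>\<^sup>+ z. emeasure (map_pmf ((#) x) (paths r p pc z n)) {xs. y \<notin> set xs} \<partial>KK x"
    unfolding paths_first by simp
  also have "\<dots> = \<integral>\<^sup>+ z. (if x = y then 0 else avoid y n z) \<partial>KK x"
    by (intro nn_integral_cong) (auto simp: Suc[symmetric] measure_pmf.emeasure_eq_measure vimage_def)
  also have "\<dots> = avoid y (Suc n) x" by simp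
  finally show ?case .
qed

lemma mht_avoid: "mht r p pc x y = (\<Sum>n. avoid y n x)"
  unfolding mht_def avoid_prob ..


lemma meas[measurable]: "f \<in> borel_measurable (KK x)"
  by simp

lemma avoid_le1: "avoid y n x \<le> 1"
proof (induction n arbitrary: x)
  case (Suc n)
  have "(\<integral>\<^sup>+ z. avoid y n z \<partial>KK x) \<le> (\<integral>\<^sup>+ z. 1 \<partial>KK x)"
    by (intro nn_integral_mono Suc)
  then show ?case by (simp add: measure_pmf.emeasure_space_1)
qed simp

lemma suminf_head: "(\<Sum>n. f n :: ennreal) = f 0 + (\<Sum>n. f (Suc n))"
  using suminf_offset[of f 1] by simp

lemma mht_step: "mht r p pc x y = (if x = y then 0 else 1 + \<integral>\<^sup>+ z. mht r p pc z y \<partial>KK x)"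
proof -
  have "mht r p pc x y = avoid y 0 x + (\<Sum>n. avoid y (Suc n) x)"
    unfolding mht_avoid by (rule suminf_head)
  also have "\<dots> = (if x = y then 0 else 1 + \<integral>\<^sup>+ z. mht r p pc z y \<partial>KK x)"
    by (simp add: mht_avoid nn_integral_suminf)
  finally show ?thesis .
qed

definition ps :: "nat \<Rightarrow> state \<Rightarrow> state \<Rightarrow> ennreal" where
  "ps N x y = (\<Sum>n<N. avoid y n x)"

lemma ps_Suc: "ps (Suc N) x y = (if x = y then 0 else 1 + \<integral>\<^sup>+ z. ps N z y \<partial>KK x)"
proof -
  have "ps (Suc N) x y = avoid y 0 x + (\<Sum>n<N. avoid y (Suc n) x)"
    unfolding ps_def by (rule sum.lessThan_Suc_shift)
  also have "\<dots> = (if x = y then 0 else 1 + \<integral>\<^sup>+ z. ps N z y \<partial>KK x)"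
    by (simp add: ps_def nn_integral_sum)
  finally show ?thesis .
qed

lemma ps_mono: "N \<le> M \<Longrightarrow> ps N x y \<le> ps M x y"
  unfolding ps_def by (intro sum_mono2) auto

lemma ps_le_mht: "ps N x y \<le> mht r p pc x y"
  unfolding ps_def mht_avoid by (rule sum_le_suminf) auto

lemma mht_SUP: "mht r p pc x y = (SUP N. ps N x y)"
  unfolding ps_def mht_avoid by (rule suminf_eq_SUP)

lemma ps_fin: "ps N x y \<le> of_nat N"
proof -
  have "ps N x y \<le> (\<Sum>n<N. 1)" unfolding ps_def by (intro sum_mono avoid_le1)
  then show ?thesis by simp
qed

lemma ps_step_le: "x \<noteq> y \<Longrightarrow> ps N x y \<le> 1 + \<integral>\<^sup>+ z. ps N z y \<partial>KK x"
  using ps_mono[of N "Suc N" x y] ps_Suc[of N x y] by simp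

lemma mht_self[simp]: "mht r p pc y y = 0"
  by (subst mht_step) simp

lemma ps_self[simp]: "ps N y y = 0"
  unfolding ps_def by (intro sum.neutral) (metis avoid.elims)


fun fhit :: "state \<Rightarrow> nat \<Rightarrow> state \<Rightarrow> ennreal" where
  "fhit w 0 x = (if x = w then 1 else 0)"
| "fhit w (Suc n) x = (if x = w then 0 else \<integral>\<^sup>+ z. fhit w n z \<partial>KK x)"

lemma fhit_sum: "avoid w n x + (\<Sum>j\<le>n. fhit w j x) = 1"
proof (induction n arbitrary: x)
  case 0
  then show ?case by simp
next
  case (Suc n)
  show ?case
  proof (cases "x = w")
    case True
    then show ?thesis by (simp add: sum.atMost_Suc_shift del: sum.atMost_Suc)
  next
    case False
    have "avoid w (Suc n) x + (\<Sum>j\<le>Suc n. fhit w j x)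
        = (\<integral>\<^sup>+ z. avoid w n z \<partial>KK x) + (\<Sum>j\<le>n. \<integral>\<^sup>+ z. fhit w j z \<partial>KK x)"
      using False by (simp add: sum.atMost_Suc_shift del: sum.atMost_Suc)
    also have "\<dots> = \<integral>\<^sup>+ z. (avoid w n z + (\<Sum>j\<le>n. fhit w j z)) \<partial>KK x"
      by (simp add: nn_integral_add nn_integral_sum)
    also have "\<dots> = 1" by (simp add: Suc measure_pmf.emeasure_space_1)
    finally show ?thesis .
  qed
qed

definition hitp where "hitp w x = (\<Sum>j. fhit w j x)"

lemma hitp_le1: "hitp w x \<le> 1"
  unfolding hitp_def
proof (rule suminf_le_const)
  fix n
  have "(\<Sum>j<n. fhit w j x) \<le> avoid w n x + (\<Sum>j\<le>n. fhit w j x)"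
    by (intro add_increasing zero_le sum_mono2) auto
  then show "(\<Sum>j<n. fhit w j x) \<le> 1" by (simp add: fhit_sum)
qed auto

lemma hitp_1: assumes "mht r p pc x w \<noteq> \<top>" shows "hitp w x = 1"
proof (rule ccontr)
  assume "hitp w x \<noteq> 1"
  then have lt: "hitp w x < 1" using hitp_le1 by (simp add: order_less_le)
  then obtain e where e: "hitp w x = ennreal e" "0 \<le> e" "e < 1"
    by (cases "hitp w x") (auto simp: ennreal_less_one_iff)
  have "ennreal (1 - e) \<le> avoid w n x" for n
  proof -
    have "(\<Sum>j\<le>n. fhit w j x) \<le> hitp w x" unfolding hitp_def
      by (rule sum_le_suminf) auto
    then have "1 \<le> avoid w n x + ennreal e" using fhit_sum[of w n x] e(1)
      by (metis add_left_mono)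
    then have "1 - ennreal e \<le> avoid w n x"
      by (simp add: ennreal_minus_le_iff add.commute)
    then show ?thesis using e by (simp add: ennreal_minus[symmetric])
  qed
  then have "(\<Sum>n. ennreal (1 - e)) \<le> mht r p pc x w" unfolding mht_avoid
    by (intro suminf_le) auto
  moreover have "(\<Sum>n. ennreal (1 - e)) = \<top>"
  proof (rule ccontr)
    assume "(\<Sum>n. ennreal (1 - e)) \<noteq> \<top>"
    then have "summable (\<lambda>n::nat. 1 - e)" using e by (intro summable_suminf_not_top) auto
    then have "(\<lambda>n::nat. 1 - e) \<longlonglongrightarrow> 0" by (rule summable_LIMSEQ_zero)
    then show False using e LIMSEQ_const_iff[of "1 - e" 0] by simp
  qed
  ultimately show False using assms by (simp add: top_unique)
qed


definition closedR where
  "closedR R w \<longleftrightarrow> (\<forall>z\<in>R. z \<noteq> w \<longrightarrow> set_pmf (K r p pc z) \<subseteq> R)"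

lemma decomp:
  assumes "y \<notin> R" "closedR R w" "x \<in> R"
  shows "avoid y n x = avoid w n x + (\<Sum>j\<le>n. fhit w j x * avoid y (n - j) w)"
  using assms(3)
proof (induction n arbitrary: x)
  case 0
  then show ?case using assms(1) by auto
next
  case (Suc n)
  have xy: "x \<noteq> y" using Suc.prems assms(1) by auto
  show ?case
  proof (cases "x = w")
    case True
    then show ?thesis using xy by (simp add: sum.atMost_Suc_shift del: sum.atMost_Suc)
  next
    case False
    have sub: "set_pmf (K r p pc x) \<subseteq> R" using assms(2) Suc.prems False by (auto simp: closedR_def)
    have "avoid y (Suc n) x = \<integral>\<^sup>+ z. avoid y n z \<partial>KK x" using xy by simp
    also have "\<dots> = \<integral>\<^sup>+ z. (avoid w n z + (\<Sum>j\<le>n. fhit w j z * avoid y (n - j) w)) \<partial>KK x"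
      using sub Suc.IH by (intro nn_integral_cong_AE) (auto simp: AE_measure_pmf_iff)
    also have "\<dots> = avoid w (Suc n) x + (\<Sum>j\<le>n. fhit w (Suc j) x * avoid y (n - j) w)"
      using False by (simp add: nn_integral_add nn_integral_sum nn_integral_multc)
    also have "\<dots> = avoid w (Suc n) x + (\<Sum>j\<le>Suc n. fhit w j x * avoid y (Suc n - j) w)"
      using False by (simp add: sum.atMost_Suc_shift del: sum.atMost_Suc)
    finally show ?thesis .
  qed
qed

lemma L2_exact:
  assumes "y \<notin> R" "closedR R w" "x \<in> R"
  shows "mht r p pc x y = mht r p pc x w + mht r p pc w y"
proof -
  have "mht r p pc x y = (\<Sum>n. avoid w n x + (\<Sum>j\<le>n. fhit w j x * avoid y (n - j) w))"
    unfolding mht_avoid using decomp[OF assms] by simp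
  also have "\<dots> = mht r p pc x w + hitp w x * mht r p pc w y"
    by (simp add: suminf_add[symmetric] mht_avoid hitp_def cauchy_ennreal[of "\<lambda>j. fhit w j x" "\<lambda>m. avoid y m w"])
  finally have eq: "mht r p pc x y = mht r p pc x w + hitp w x * mht r p pc w y" .
  show ?thesis
  proof (cases "mht r p pc x w = \<top>")
    case True
    then show ?thesis using eq by simp
  next
    case False
    then show ?thesis using eq hitp_1 by simp
  qed
qed

lemma L2_ps:
  assumes "y \<notin> R" "closedR R w" "x \<in> R"
  shows "ps N x y \<le> ps N x w + ps N w y"
proof -
  have "ps N x y = ps N x w + (\<Sum>n<N. \<Sum>j\<le>n. fhit w j x * avoid y (n - j) w)"
    unfolding ps_def using decomp[OF assms] by (simp add: sum.distrib)
  also have "\<dots> \<le> ps N x w + (\<Sum>j<N. fhit w j x) * ps N w y"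
    unfolding ps_def by (intro add_left_mono cauchy_ennreal_le)
  also have "\<dots> \<le> ps N x w + 1 * ps N w y"
  proof -
    have "(\<Sum>j<N. fhit w j x) \<le> hitp w x" unfolding hitp_def by (rule sum_le_suminf) auto
    then have "(\<Sum>j<N. fhit w j x) \<le> 1" using hitp_le1 order_trans by blast
    then show ?thesis by (intro add_left_mono mult_right_mono) auto
  qed
  finally show ?thesis by simp
qed


end

lemma up_Nil[simp]: "up r [] = Sharp"
  by (simp add: up_def)

lemma up_snoc: "up r (\<gamma> @ [a]) = (if a = r then up r \<gamma> else S (a + 1) \<gamma>)"
  by (simp add: up_def)

definition fs :: "nat list \<Rightarrow> nat \<Rightarrow> state \<Rightarrow> state" where
  "fs \<gamma> r x = (case x of Sharp \<Rightarrow> up r \<gamma> | S i \<beta> \<Rightarrow> S i (\<gamma> @ \<beta>) | C i \<beta> \<Rightarrow> C i (\<gamma> @ \<beta>))"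

lemma up_append: "up r (\<gamma> @ \<beta>) = fs \<gamma> r (up r \<beta>)"
proof (induction \<beta> rule: rev_induct)
  case Nil
  then show ?case by (simp add: fs_def)
next
  case (snoc a \<beta>)
  then show ?case using up_snoc[of r "\<gamma> @ \<beta>" a] up_snoc[of r \<beta> a] by (simp add: fs_def)
qed

lemma up_notC[simp]: "up r \<gamma> \<noteq> C k \<delta>" "C k \<delta> \<noteq> up r \<gamma>"
  by (simp_all add: up_def Let_def)

lemma up_S_len: "up r \<gamma> = S k \<delta> \<Longrightarrow> length \<delta> < length \<gamma>"
proof (induction \<gamma> arbitrary: k \<delta> rule: rev_induct)
  case Nil
  then show ?case by simp
next
  case (snoc a \<gamma>)
  then show ?case by (fastforce simp: up_snoc split: if_splits)
qed

definition valid :: "nat \<Rightarrow> state \<Rightarrow> bool" where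
  "valid r x = (case x of Sharp \<Rightarrow> True
      | S i \<beta> \<Rightarrow> 1 \<le> i \<and> i \<le> r \<and> (\<forall>a\<in>set \<beta>. 1 \<le> a \<and> a \<le> r)
      | C i \<beta> \<Rightarrow> 1 \<le> i \<and> i \<le> r \<and> (\<forall>a\<in>set \<beta>. 1 \<le> a \<and> a \<le> r))"

lemma up_valid: "\<forall>a\<in>set \<gamma>. 1 \<le> a \<and> a \<le> r \<Longrightarrow> valid r (up r \<gamma>)"
proof (induction \<gamma> rule: rev_induct)
  case Nil
  then show ?case by (simp add: valid_def)
next
  case (snoc a \<gamma>)
  then show ?case by (auto simp: up_snoc valid_def)
qed

lemma set_pmf_map_bern: "set_pmf (map_pmf f (bernoulli_pmf q)) \<subseteq> {f True, f False}"
proof -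
  have "set_pmf (map_pmf f (bernoulli_pmf q)) \<subseteq> f ` UNIV" by auto
  then show ?thesis by (simp add: UNIV_bool insert_commute)
qed

lemma succ_cases:
  assumes "z \<in> set_pmf (K r p pc x)"
  shows "(x = Sharp \<and> z = S 1 []) \<or>
    (\<exists>i \<beta>. x = S i \<beta> \<and> 1 \<le> i \<and> i \<le> r \<and> (z = C i \<beta> \<or> z = up r (\<beta> @ [i]))) \<or>
    (\<exists>i \<beta>. x = C i \<beta> \<and> 1 \<le> i \<and> i \<le> r \<and> (z = S 1 (\<beta> @ [i]) \<or> z = up r (\<beta> @ [i]))) \<or>
    (\<exists>i \<beta>. (x = S i \<beta> \<or> x = C i \<beta>) \<and> \<not> (1 \<le> i \<and> i \<le> r) \<and> z = Sharp)"
  using assms set_pmf_map_bern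
  by (cases x) (auto simp: up_snoc split: if_splits dest!: subsetD[OF set_pmf_map_bern])

lemma succ_valid:
  assumes "r \<ge> 1" "valid r x" "z \<in> set_pmf (K r p pc x)" shows "valid r z"
proof -
  have upv: "valid r (up r (\<beta> @ [i]))" if "x = S i \<beta> \<or> x = C i \<beta>" "1 \<le> i" "i \<le> r" for i \<beta>
    using that assms(2) by (intro up_valid) (auto simp: valid_def)
  show ?thesis using succ_cases[OF assms(3)] upv assms(1,2) by (auto simp: valid_def)
qed

lemma K_fs: "valid r x \<Longrightarrow> x \<noteq> Sharp \<Longrightarrow> K r p pc (fs \<gamma> r x) = map_pmf (fs \<gamma> r) (K r p pc x)"
  by (cases x) (auto simp: fs_def valid_def pmf.map_comp o_def up_append[unfolded fs_def] intro!: pmf.map_cong)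

lemma fs_eq_up: "fs \<gamma> r x = up r \<gamma> \<longleftrightarrow> x = Sharp"
  by (cases x) (auto simp: fs_def dest!: up_S_len[OF sym])

context
  fixes r :: nat and p pc :: real
  assumes r1: "r \<ge> 1"
begin

lemma avoid_fs: "valid r x \<Longrightarrow> avoid r p pc (up r \<gamma>) n (fs \<gamma> r x) = avoid r p pc Sharp n x"
proof (induction n arbitrary: x)
  case 0
  then show ?case by (simp add: fs_eq_up)
next
  case (Suc n)
  show ?case
  proof (cases "x = Sharp")
    case True
    then show ?thesis by (simp add: fs_def)
  next
    case False
    then have "avoid r p pc (up r \<gamma>) (Suc n) (fs \<gamma> r x) =
        \<integral>\<^sup>+ z. avoid r p pc (up r \<gamma>) n (fs \<gamma> r z) \<partial>KK r p pc x"
      using Suc.prems by (simp add: fs_eq_up K_fs)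
    also have "\<dots> = \<integral>\<^sup>+ z. avoid r p pc Sharp n z \<partial>KK r p pc x"
      using Suc succ_valid[OF r1] by (intro nn_integral_cong_AE) (auto simp: AE_measure_pmf_iff)
    finally show ?thesis using False by simp
  qed
qed

lemma self_sim: "mht r p pc (S 1 \<gamma>) (up r \<gamma>) = mht r p pc (S 1 []) Sharp"
  "ps r p pc N (S 1 \<gamma>) (up r \<gamma>) = ps r p pc N (S 1 []) Sharp"
  using avoid_fs[of "S 1 []" \<gamma>] r1
  by (auto simp: mht_avoid ps_def fs_def valid_def)

end



definition insub :: "nat \<Rightarrow> nat list \<Rightarrow> nat \<Rightarrow> state \<Rightarrow> bool" where
  "insub r \<gamma> j z \<longleftrightarrow> (\<exists>k \<delta>. 1 \<le> k \<and> k \<le> r \<and> (\<forall>a\<in>set \<delta>. 1 \<le> a \<and> a \<le> r) \<and>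
      (z = S k (\<gamma> @ [j] @ \<delta>) \<or> z = C k (\<gamma> @ [j] @ \<delta>)))"

lemma up_valid_S: "\<forall>a\<in>set \<delta>. 1 \<le> a \<and> a \<le> r \<Longrightarrow> up r \<delta> = S k \<delta>' \<Longrightarrow>
   1 \<le> k \<and> k \<le> r \<and> (\<forall>a\<in>set \<delta>'. 1 \<le> a \<and> a \<le> r)"
  using up_valid[of \<delta> r] by (simp add: valid_def)

lemma insub_closed:
  assumes "insub r \<gamma> j z" "z' \<in> set_pmf (K r p pc z)"
  shows "insub r \<gamma> j z' \<or> z' = up r (\<gamma> @ [j])"
proof -
  obtain k \<delta> where kd: "1 \<le> k" "k \<le> r" "\<forall>a\<in>set \<delta>. 1 \<le> a \<and> a \<le> r"
    "z = S k (\<gamma> @ [j] @ \<delta>) \<or> z = C k (\<gamma> @ [j] @ \<delta>)"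
    using assms(1) unfolding insub_def by blast
  have upc: "insub r \<gamma> j (up r (\<gamma> @ [j] @ \<delta> @ [k])) \<or> up r (\<gamma> @ [j] @ \<delta> @ [k]) = up r (\<gamma> @ [j])"
  proof -
    have e: "up r (\<gamma> @ [j] @ \<delta> @ [k]) = fs (\<gamma> @ [j]) r (up r (\<delta> @ [k]))"
      using up_append[of r "\<gamma> @ [j]" "\<delta> @ [k]"] by simp
    have v: "\<forall>a\<in>set (\<delta> @ [k]). 1 \<le> a \<and> a \<le> r" using kd by auto
    show ?thesis
    proof (cases "up r (\<delta> @ [k])")
      case Sharp
      then show ?thesis using e by (simp add: fs_def)
    next
      case (S k' \<delta>')
      then show ?thesis using e up_valid_S[OF v S] unfolding insub_def fs_def by auto
    next
      case (C k' \<delta>')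
      then show ?thesis by simp
    qed
  qed
  show ?thesis
    using succ_cases[OF assms(2)] kd upc
    by (auto simp: insub_def intro: exI[of _ "\<delta> @ [k]"])
qed

context
  fixes r :: nat and p pc :: real
  assumes r1: "r \<ge> 1" and p0: "0 \<le> p" and p1: "p \<le> 1" and pc0: "0 \<le> pc" and pc1: "pc \<le> 1"
begin

lemma int_S: "1 \<le> j \<Longrightarrow> j \<le> r \<Longrightarrow>
  (\<integral>\<^sup>+ z. g z \<partial>KK r p pc (S j \<gamma>)) = ennreal p * g (C j \<gamma>) + ennreal (1 - p) * g (up r (\<gamma> @ [j]))"
  using p0 p1 by (auto simp: up_snoc mult.commute)

lemma int_C: "1 \<le> j \<Longrightarrow> j \<le> r \<Longrightarrow>
  (\<integral>\<^sup>+ z. g z \<partial>KK r p pc (C j \<gamma>)) = ennreal pc * g (S 1 (\<gamma> @ [j])) + ennreal (1 - pc) * g (up r (\<gamma> @ [j]))"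
  using pc0 pc1 by (auto simp: up_snoc mult.commute)


lemma w_ne: "1 \<le> j \<Longrightarrow> j \<le> r \<Longrightarrow> S j \<gamma> \<noteq> up r (\<gamma> @ [j]) \<and> C j \<gamma> \<noteq> up r (\<gamma> @ [j])"
  using up_S_len[of r \<gamma> j \<gamma>] by (auto simp: up_snoc)

abbreviation "Cc \<equiv> mht r p pc (S 1 []) Sharp"
abbreviation "Dl \<equiv> 1 + ennreal p * (1 + ennreal pc * Cc)"
abbreviation "CN N \<equiv> ps r p pc N (S 1 []) Sharp"
abbreviation "DN N \<equiv> 1 + ennreal p * (1 + ennreal pc * CN N)"

lemma to_w: assumes "1 \<le> j" "j \<le> r" shows "mht r p pc (S j \<gamma>) (up r (\<gamma> @ [j])) = Dl"
proof -
  have "mht r p pc (C j \<gamma>) (up r (\<gamma> @ [j])) = 1 + ennreal pc * Cc"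
    using w_ne[OF assms] assms self_sim(1)[OF r1, where \<gamma>="\<gamma> @ [j]" and p=p and pc=pc] by (subst mht_step) (simp add: int_C del: K.simps)
  then show ?thesis
    using w_ne[OF assms] assms by (subst mht_step) (simp add: int_S del: K.simps)
qed

lemma to_w_ps: assumes "1 \<le> j" "j \<le> r" shows "ps r p pc N (S j \<gamma>) (up r (\<gamma> @ [j])) \<le> DN N"
proof -
  have "ps r p pc N (C j \<gamma>) (up r (\<gamma> @ [j])) \<le> 1 + ennreal pc * CN N"
    using w_ne[OF assms] assms ps_step_le[of "C j \<gamma>" "up r (\<gamma> @ [j])" r p pc N]
    using self_sim(2)[OF r1, where \<gamma>="\<gamma> @ [j]" and p=p and pc=pc and N=N] by (simp add: int_C del: K.simps)
  then show ?thesis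
    using w_ne[OF assms] assms ps_step_le[of "S j \<gamma>" "up r (\<gamma> @ [j])" r p pc N]
    by (simp add: int_S del: K.simps) (meson add_left_mono mult_left_mono order_trans zero_le)
qed

lemma SL_region:
  assumes "1 \<le> j" "j \<le> r" "y \<noteq> S j \<gamma>" "y \<noteq> C j \<gamma>" "\<not> insub r \<gamma> j y" "y \<noteq> up r (\<gamma> @ [j])"
  shows "y \<notin> {S j \<gamma>, C j \<gamma>, up r (\<gamma> @ [j])} \<union> Collect (insub r \<gamma> j)"
    "closedR r p pc ({S j \<gamma>, C j \<gamma>, up r (\<gamma> @ [j])} \<union> Collect (insub r \<gamma> j)) (up r (\<gamma> @ [j]))"
    "S j \<gamma> \<in> {S j \<gamma>, C j \<gamma>, up r (\<gamma> @ [j])} \<union> Collect (insub r \<gamma> j)"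
proof -
  show "y \<notin> {S j \<gamma>, C j \<gamma>, up r (\<gamma> @ [j])} \<union> Collect (insub r \<gamma> j)" using assms by auto
  show "S j \<gamma> \<in> {S j \<gamma>, C j \<gamma>, up r (\<gamma> @ [j])} \<union> Collect (insub r \<gamma> j)" by auto
  have i1: "insub r \<gamma> j (S 1 (\<gamma> @ [j]))" unfolding insub_def using r1
    by (intro exI[of _ 1] exI[of _ "[]"]) auto
  show "closedR r p pc ({S j \<gamma>, C j \<gamma>, up r (\<gamma> @ [j])} \<union> Collect (insub r \<gamma> j)) (up r (\<gamma> @ [j]))"
    unfolding closedR_def
  proof (intro ballI impI subsetI)
    fix z z'
    assume z: "z \<in> {S j \<gamma>, C j \<gamma>, up r (\<gamma> @ [j])} \<union> Collect (insub r \<gamma> j)"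
      and zw: "z \<noteq> up r (\<gamma> @ [j])" and z': "z' \<in> set_pmf (K r p pc z)"
    show "z' \<in> {S j \<gamma>, C j \<gamma>, up r (\<gamma> @ [j])} \<union> Collect (insub r \<gamma> j)"
    proof -
      consider "z = S j \<gamma>" | "z = C j \<gamma>" | "insub r \<gamma> j z" using z zw by auto
      then show ?thesis
      proof cases
        case 1
        then show ?thesis using succ_cases[OF z'[unfolded 1]] assms(1,2) by auto
      next
        case 2
        then show ?thesis using succ_cases[OF z'[unfolded 2]] i1 assms(1,2) by auto
      next
        case 3
        then show ?thesis using insub_closed[OF 3 z'] by auto
      qed
    qed
  qed
qed

lemma SL:
  assumes "1 \<le> j" "j \<le> r" "y \<noteq> S j \<gamma>" "y \<noteq> C j \<gamma>" "\<not> insub r \<gamma> j y"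
  shows "mht r p pc (S j \<gamma>) y = Dl + mht r p pc (up r (\<gamma> @ [j])) y"
proof (cases "y = up r (\<gamma> @ [j])")
  case True
  then show ?thesis using to_w[OF assms(1,2)] by simp
next
  case False
  show ?thesis using L2_exact[OF SL_region[OF assms False]] to_w[OF assms(1,2)] by simp
qed

lemma SL_ps:
  assumes "1 \<le> j" "j \<le> r" "y \<noteq> S j \<gamma>" "y \<noteq> C j \<gamma>" "\<not> insub r \<gamma> j y"
  shows "ps r p pc N (S j \<gamma>) y \<le> DN N + ps r p pc N (up r (\<gamma> @ [j])) y"
proof (cases "y = up r (\<gamma> @ [j])")
  case True
  then show ?thesis using to_w_ps[OF assms(1,2)] by simp
next
  case False
  show ?thesis using L2_ps[OF SL_region[OF assms False], of N] to_w_ps[OF assms(1,2), of N]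
    by (meson add_right_mono order_trans)
qed


lemma chain:
  assumes "1 \<le> j" "j \<le> i" "i \<le> r"
    and "\<And>l. j \<le> l \<Longrightarrow> l < i \<Longrightarrow> y \<noteq> S l \<beta> \<and> y \<noteq> C l \<beta> \<and> \<not> insub r \<beta> l y"
  shows "mht r p pc (S j \<beta>) y = of_nat (i - j) * Dl + mht r p pc (S i \<beta>) y"
  using assms
proof (induction "i - j" arbitrary: j)
  case 0
  then show ?case by simp
next
  case (Suc d)
  have ji: "j < i" using Suc by simp
  have up: "up r (\<beta> @ [j]) = S (j + 1) \<beta>" using ji Suc.prems by (simp add: up_snoc)
  have "mht r p pc (S j \<beta>) y = Dl + mht r p pc (S (j + 1) \<beta>) y"
    using SL[of j y \<beta>] Suc.prems(4)[of j] ji Suc.prems up by simp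
  also have "\<dots> = Dl + (of_nat (i - (j + 1)) * Dl + mht r p pc (S i \<beta>) y)"
    using Suc.hyps(1)[of "j + 1"] Suc.hyps(2) Suc.prems ji by simp
  also have "\<dots> = of_nat (i - j) * Dl + mht r p pc (S i \<beta>) y"
    using ji by (simp add: Suc_diff_Suc[symmetric] distrib_right add.assoc)
  finally show ?case .
qed

lemma chain_ps:
  assumes "1 \<le> j" "j \<le> i" "i \<le> r"
    and "\<And>l. j \<le> l \<Longrightarrow> l < i \<Longrightarrow> y \<noteq> S l \<beta> \<and> y \<noteq> C l \<beta> \<and> \<not> insub r \<beta> l y"
  shows "ps r p pc N (S j \<beta>) y \<le> of_nat (i - j) * DN N + ps r p pc N (S i \<beta>) y"
  using assms
proof (induction "i - j" arbitrary: j)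
  case 0
  then show ?case by simp
next
  case (Suc d)
  have ji: "j < i" using Suc by simp
  have up: "up r (\<beta> @ [j]) = S (j + 1) \<beta>" using ji Suc.prems by (simp add: up_snoc)
  have "ps r p pc N (S j \<beta>) y \<le> DN N + ps r p pc N (S (j + 1) \<beta>) y"
    using SL_ps[of j y \<beta> N] Suc.prems(4)[of j] ji Suc.prems up by simp
  also have "\<dots> \<le> DN N + (of_nat (i - (j + 1)) * DN N + ps r p pc N (S i \<beta>) y)"
    using Suc.hyps(1)[of "j + 1"] Suc.hyps(2) Suc.prems ji by (intro add_left_mono) simp
  also have "\<dots> = of_nat (i - j) * DN N + ps r p pc N (S i \<beta>) y"
    using ji by (simp add: Suc_diff_Suc[symmetric] distrib_right add.assoc)
  finally show ?case .
qed

lemma insub_len: "insub r \<beta> l (S i \<gamma>) \<Longrightarrow> length \<gamma> > length \<beta>"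
  by (auto simp: insub_def)

lemma within: "1 \<le> j \<Longrightarrow> j \<le> i \<Longrightarrow> i \<le> r \<Longrightarrow> mht r p pc (S j \<beta>) (S i \<beta>) = of_nat (i - j) * Dl"
  using chain[of j i "S i \<beta>" \<beta>] by (auto dest: insub_len)

lemma exit_Sharp: "1 \<le> j \<Longrightarrow> j \<le> r \<Longrightarrow>
   mht r p pc (S j \<gamma>) Sharp = of_nat (r - j + 1) * Dl + mht r p pc (up r \<gamma>) Sharp"
  using chain[of j r Sharp \<gamma>] SL[of r Sharp \<gamma>] r1
  by (auto simp: insub_def up_snoc distrib_right add.assoc)

lemma exit_Sharp_ps: "1 \<le> j \<Longrightarrow> j \<le> r \<Longrightarrow>
   ps r p pc N (S j \<gamma>) Sharp \<le> of_nat (r - j + 1) * DN N + ps r p pc N (up r \<gamma>) Sharp"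
proof -
  assume a: "1 \<le> j" "j \<le> r"
  have "ps r p pc N (S j \<gamma>) Sharp \<le> of_nat (r - j) * DN N + ps r p pc N (S r \<gamma>) Sharp"
    using chain_ps[of j r Sharp \<gamma> N] a by (auto simp: insub_def)
  also have "\<dots> \<le> of_nat (r - j) * DN N + (DN N + ps r p pc N (up r \<gamma>) Sharp)"
    using SL_ps[of r Sharp \<gamma> N] r1 by (intro add_left_mono) (auto simp: insub_def up_snoc)
  also have "\<dots> = of_nat (r - j + 1) * DN N + ps r p pc N (up r \<gamma>) Sharp"
    by (simp add: distrib_right add_ac)
  finally show ?thesis .
qed

lemma up_Sharp: "\<forall>a\<in>set \<gamma>. 1 \<le> a \<and> a \<le> r \<Longrightarrow>
   mht r p pc (up r \<gamma>) Sharp = (\<Sum>s<length \<gamma>. of_nat (r - \<gamma> ! s) * Dl)"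
proof (induction \<gamma> rule: rev_induct)
  case Nil
  then show ?case by simp
next
  case (snoc a \<gamma>)
  show ?case
  proof (cases "a = r")
    case True
    then show ?thesis using snoc by (simp add: up_snoc nth_append)
  next
    case False
    then have ar: "a < r" "r - (a + 1) + 1 = r - a" using snoc.prems by auto
    then have "mht r p pc (up r (\<gamma> @ [a])) Sharp = of_nat (r - a) * Dl + mht r p pc (up r \<gamma>) Sharp"
      using exit_Sharp[of "a + 1" \<gamma>] False by (simp add: up_snoc)
    then show ?thesis using snoc by (simp add: nth_append add.commute)
  qed
qed

lemma CN_bound: "CN N \<le> of_nat r * DN N"
  using exit_Sharp_ps[where j=1 and \<gamma>="[]" and N=N] r1 by simp


lemma ennreal_expr: "0 \<le> c \<Longrightarrow> of_nat n * (1 + ennreal p * (1 + ennreal pc * ennreal c)) = ennreal (real n * (1 + p * (1 + pc * c)))"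
  using p0 pc0 by (simp add: ennreal_mult ennreal_plus ennreal_of_nat_eq_real_of_nat)

lemma Cc_bound: assumes "p * pc * real r < 1" shows "Cc \<le> ennreal (real r * (1 + p) / (1 - p * pc * real r))"
proof -
  have "CN N \<le> ennreal (real r * (1 + p) / (1 - p * pc * real r))" for N
  proof -
    have "CN N \<noteq> \<top>" using ps_fin[of r p pc N "S 1 []" Sharp] by (auto simp: top_unique)
    then obtain c where c: "CN N = ennreal c" "0 \<le> c" by (cases "CN N") auto
    have "ennreal c \<le> ennreal (real r * (1 + p * (1 + pc * c)))"
      using CN_bound[of N] c ennreal_expr[OF c(2), of r] by simp
    then have "c \<le> real r * (1 + p * (1 + pc * c))" using p0 pc0 c(2)
      by (subst (asm) ennreal_le_iff) auto
    then have "c * (1 - p * pc * real r) \<le> real r * (1 + p)" by (simp add: algebra_simps)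
    then have "c \<le> real r * (1 + p) / (1 - p * pc * real r)" using assms by (simp add: field_simps)
    then show ?thesis using c by simp
  qed
  then show ?thesis unfolding mht_SUP by (intro SUP_least) auto
qed

lemma Cc_fin: "p * pc * real r < 1 \<Longrightarrow> Cc \<noteq> \<top>"
  using Cc_bound by (auto simp: top_unique)

end



definition right :: "nat list \<Rightarrow> nat list \<Rightarrow> bool" where
  "right u v \<longleftrightarrow> (\<exists>l. l < length u \<and> l < length v \<and> take l u = take l v \<and> v ! l < u ! l)"

lemma right_append_self: "\<not> right (v @ w) v"
  by (auto simp: right_def nth_append)

lemma right_ext: "right u v \<Longrightarrow> right (u @ w) v"
  unfolding right_def by (metis le_simps(1) length_append nth_append take_append take_eq_Nil2 trans_less_add1 diff_is_0_eq' append_Nil2 less_imp_le_nat)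

lemma up_dec: "up r u = Sharp \<or> (\<exists>g a m. u = g @ a # replicate m r \<and> a \<noteq> r \<and> up r u = S (a + 1) g)"
proof (induction u rule: rev_induct)
  case Nil
  then show ?case by simp
next
  case (snoc b u)
  show ?case
  proof (cases "b = r")
    case True
    from snoc show ?thesis
    proof
      assume "\<exists>g a m. u = g @ a # replicate m r \<and> a \<noteq> r \<and> up r u = S (a + 1) g"
      then obtain g a m where gam: "u = g @ a # replicate m r" "a \<noteq> r" "up r u = S (a + 1) g" by blast
      have "up r (u @ [b]) = S (a + 1) g" using True gam(3) by (simp add: up_snoc)
      then have "u @ [b] = g @ a # replicate (Suc m) r \<and> a \<noteq> r \<and> up r (u @ [b]) = S (a + 1) g"
        using True gam(1,2) by (simp add: replicate_append_same[symmetric])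
      then show ?thesis by blast
    qed (simp add: True up_snoc)
  next
    case False
    then show ?thesis by (intro disjI2 exI[of _ u] exI[of _ b] exI[of _ 0]) (simp add: up_snoc)
  qed
qed

lemma right_up:
  assumes "right u v" "up r u = S k \<delta>"
  shows "right (\<delta> @ [k]) v"
proof -
  obtain g a m where u: "u = g @ a # replicate m r" "a \<noteq> r" "up r u = S (a + 1) g"
    using up_dec[of r u] assms(2) by auto
  have kd: "k = a + 1" "\<delta> = g" using u assms(2) by auto
  obtain l where l: "l < length u" "l < length v" "take l u = take l v" "v ! l < u ! l"
    using assms(1) unfolding right_def by blast
  consider "l < length g" | "l = length g" | "l > length g" by linarith
  then show ?thesis
  proof cases
    case 1
    then show ?thesis unfolding right_def kd using l u
      by (intro exI[of _ l]) (auto simp: nth_append take_append)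
  next
    case 2
    then show ?thesis unfolding right_def kd using l u
      by (intro exI[of _ l]) (auto simp: nth_append take_append)
  next
    case 3
    have "take (length g) (take l u) = take (length g) (take l v)" using l by simp
    then have t: "take (length g) v = g" using 3 u by (simp add: min_def)
    have "take (Suc (length g)) (take l u) = take (Suc (length g)) (take l v)" using l by simp
    moreover have "Suc 0 \<le> l - length g" using 3 by simp
    ultimately have "take (Suc (length g)) v = g @ [a]" using 3 u by (simp add: min_def take_Suc_conv_app_nth)
    then have "v ! length g = a" using l(2) 3
      by (metis le_simps(3) length_append_singleton lessI nat_less_le nth_append_length nth_take)
    then show ?thesis unfolding right_def kd using l u t 3
      by (intro exI[of _ "length g"]) (auto simp: nth_append)
  qed
qed

lemma right_up_self:
  assumes "up r v = S k \<delta>"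
  shows "right (\<delta> @ [k]) v"
proof -
  obtain g a m where u: "v = g @ a # replicate m r" "a \<noteq> r" "up r v = S (a + 1) g"
    using up_dec[of r v] assms by auto
  then show ?thesis unfolding right_def using assms
    by (intro exI[of _ "length g"]) (auto simp: nth_append)
qed

definition Rr :: "nat list \<Rightarrow> state set" where
  "Rr v = {Sharp} \<union> {z. \<exists>j g. (z = S j g \<or> z = C j g) \<and> right (g @ [j]) v}"

lemma up_in_Rr: "right u v \<Longrightarrow> up r u \<in> Rr v"
  using right_up[of u v r] up_dec[of r u] by (auto simp: Rr_def)

lemma up_self_Rr: "up r v \<in> Rr v"
  using right_up_self[of r v] up_dec[of r v] by (auto simp: Rr_def)

lemma Rr_closed: "closedR r p pc (Rr v) Sharp"
  unfolding closedR_def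
proof (intro ballI impI subsetI)
  fix z z'
  assume z: "z \<in> Rr v" "z \<noteq> Sharp" and z': "z' \<in> set_pmf (K r p pc z)"
  obtain j g where jg: "z = S j g \<or> z = C j g" "right (g @ [j]) v" using z by (auto simp: Rr_def)
  have "right (g @ [j] @ [1]) v" using right_ext[OF jg(2)] by simp
  then show "z' \<in> Rr v"
    using succ_cases[OF z'] jg up_in_Rr[OF jg(2), of r] by (auto simp: Rr_def)
qed

lemma T_notin_Rr: "S i (v @ w) \<notin> Rr v"
  using right_append_self[of v "w @ [i]"] by (auto simp: Rr_def)




lemma insub_nth: "insub r \<beta> l (S i \<alpha>) \<Longrightarrow> \<alpha> ! length \<beta> = l"
  by (auto simp: insub_def)

lemma sum_shift1: "(\<Sum>s = 1..k. g s) = (\<Sum>s<k. g (Suc s))"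
  by (induction k) auto

lemma bern_map_set: "0 \<le> q \<Longrightarrow> q \<le> 1 \<Longrightarrow> z \<in> set_pmf (map_pmf (\<lambda>b. if b then X else Y) (bernoulli_pmf q)) \<Longrightarrow>
   (z = X \<and> q \<noteq> 0) \<or> z = Y"
  by (auto simp: set_pmf_iff split: if_splits)

lemma trapped:
  assumes "\<forall>z\<in>U. set_pmf (K r p pc z) \<subseteq> U" "y \<notin> U"
  shows "x \<in> U \<Longrightarrow> avoid r p pc y n x = 1"
proof (induction n arbitrary: x)
  case 0
  then show ?case using assms by auto
next
  case (Suc n)
  have "avoid r p pc y (Suc n) x = \<integral>\<^sup>+ z. avoid r p pc y n z \<partial>KK r p pc x" using Suc.prems assms by auto
  also have "\<dots> = \<integral>\<^sup>+ z. 1 \<partial>KK r p pc x"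
    using Suc assms(1) by (intro nn_integral_cong_AE) (auto simp: AE_measure_pmf_iff)
  finally show ?case by (simp add: measure_pmf.emeasure_space_1)
qed

lemma trapped_mht:
  assumes "\<forall>z\<in>U. set_pmf (K r p pc z) \<subseteq> U" "y \<notin> U" "x \<in> U"
  shows "mht r p pc x y = \<top>"
proof -
  have "mht r p pc x y = (\<Sum>n. 1)" unfolding mht_avoid using trapped[OF assms(1,2) assms(3)] by simp
  also have "(\<Sum>n. 1::ennreal) = \<top>"
  proof (rule ccontr)
    assume "(\<Sum>n. 1::ennreal) \<noteq> \<top>"
    then have "summable (\<lambda>n::nat. 1::real)" by (intro summable_suminf_not_top) auto
    then have "(\<lambda>n::nat. 1::real) \<longlonglongrightarrow> 0" by (rule summable_LIMSEQ_zero)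
    then show False using LIMSEQ_const_iff[of "1::real" 0] by simp
  qed
  finally show ?thesis .
qed

lemma real_id_aux: "(x::real) \<noteq> 0 \<Longrightarrow> A / x = B \<Longrightarrow> inverse x + D + B = (1 + A + x * D) / x"
  by (simp add: field_simps)

lemma solve_le:
  fixes y b :: "nat \<Rightarrow> real" and \<nu> e d :: real
  assumes nu: "0 \<le> \<nu>" and st: "\<And>k. k < t \<Longrightarrow> y k \<le> b k + \<nu> * y (Suc k) + (1 - \<nu>) * e"
    and yt: "y t \<le> d" and e: "e \<le> 1 + y 0"
  shows "\<nu> ^ t * e \<le> 1 + (\<Sum>k<t. \<nu> ^ k * b k) + \<nu> ^ t * d"
proof -
  have cl: "m \<le> t \<Longrightarrow> y 0 \<le> (\<Sum>k<m. \<nu> ^ k * b k) + (1 - \<nu> ^ m) * e + \<nu> ^ m * y m" for m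
  proof (induction m)
    case 0
    then show ?case by simp
  next
    case (Suc m)
    have "\<nu> ^ m * y m \<le> \<nu> ^ m * (b m + \<nu> * y (Suc m) + (1 - \<nu>) * e)"
      using st[of m] Suc.prems nu by (intro mult_left_mono) auto
    then show ?case using Suc by (simp add: algebra_simps)
  qed
  have "y 0 \<le> (\<Sum>k<t. \<nu> ^ k * b k) + (1 - \<nu> ^ t) * e + \<nu> ^ t * d"
    using cl[of t] mult_left_mono[OF yt, of "\<nu> ^ t"] nu by simp
  then show ?thesis using e by (simp add: algebra_simps)
qed

lemma solve_eq:
  fixes y b :: "nat \<Rightarrow> real" and \<nu> e d :: real
  assumes st: "\<And>k. k < t \<Longrightarrow> y k = b k + \<nu> * y (Suc k) + (1 - \<nu>) * e"
    and yt: "y t = d" and e: "e = 1 + y 0"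
  shows "\<nu> ^ t * e = 1 + (\<Sum>k<t. \<nu> ^ k * b k) + \<nu> ^ t * d"
proof -
  have cl: "m \<le> t \<Longrightarrow> y 0 = (\<Sum>k<m. \<nu> ^ k * b k) + (1 - \<nu> ^ m) * e + \<nu> ^ m * y m" for m
  proof (induction m)
    case 0
    then show ?case by simp
  next
    case (Suc m)
    have "\<nu> ^ m * y m = \<nu> ^ m * (b m + \<nu> * y (Suc m) + (1 - \<nu>) * e)"
      using st[of m] Suc.prems by simp
    then show ?case using Suc by (simp add: algebra_simps)
  qed
  have "y 0 = (\<Sum>k<t. \<nu> ^ k * b k) + (1 - \<nu> ^ t) * e + \<nu> ^ t * d"
    using cl[of t] yt by simp
  then show ?thesis using e by (simp add: algebra_simps)
qed

context
  fixes r :: nat and p pc :: real and \<alpha> :: "nat list" and i :: nat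
  assumes r1: "r \<ge> 1" and p0: "0 \<le> p" and p1: "p \<le> 1" and pc0: "0 \<le> pc" and pc1: "pc \<le> 1"
    and rnu: "p * pc * real r < 1"
    and av: "\<forall>a \<in> set \<alpha>. 1 \<le> a \<and> a \<le> r"
    and i1: "1 \<le> i" and ir: "i \<le> r"
begin

abbreviation "T \<equiv> S i \<alpha>"
abbreviation "m \<equiv> mht r p pc"
abbreviation "Y k \<equiv> m (S 1 (take k \<alpha>)) T"
abbreviation "E \<equiv> m Sharp T"
abbreviation "Nk k \<equiv> m (up r (take (Suc k) \<alpha>)) Sharp"
abbreviation "Yp N k \<equiv> ps r p pc N (S 1 (take k \<alpha>)) T"
abbreviation "Ep N \<equiv> ps r p pc N Sharp T"

lemma Y_last: "Y (length \<alpha>) = of_nat (i - 1) * Dl r p pc"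
  using within[OF r1 p0 p1 pc0 pc1, of 1 i \<alpha>] i1 ir by simp

lemma E_eq: "E = 1 + Y 0"
  by (subst mht_step) simp

lemma Ep_le: "Ep N \<le> 1 + Yp N 0"
  using ps_mono[of N "Suc N" r p pc Sharp T] ps_Suc[of r p pc N Sharp T] by simp

lemma a_facts:
  assumes "k < length \<alpha>"
  shows "take (Suc k) \<alpha> = take k \<alpha> @ [\<alpha> ! k]" "1 \<le> \<alpha> ! k" "\<alpha> ! k \<le> r"
    "\<alpha> = take (Suc k) \<alpha> @ drop (Suc k) \<alpha>" "length (take k \<alpha>) = k"
  using assms av append_take_drop_id[of "Suc k" \<alpha>] by (auto simp: take_Suc_conv_app_nth simp del: append_take_drop_id)

lemma cond_chain:
  assumes "k < length \<alpha>" "l < \<alpha> ! k"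
  shows "T \<noteq> S l (take k \<alpha>) \<and> T \<noteq> C l (take k \<alpha>) \<and> \<not> insub r (take k \<alpha>) l T"
proof -
  have ne: "\<alpha> \<noteq> take k \<alpha>" using assms(1) by (metis take_all_iff not_le)
  show ?thesis using assms insub_nth[of r "take k \<alpha>" l i \<alpha>] ne by auto
qed

lemma w_T: assumes "k < length \<alpha>"
  shows "m (up r (take (Suc k) \<alpha>)) T = Nk k + E"
proof -
  have "T \<notin> Rr (take (Suc k) \<alpha>)"
    using T_notin_Rr[of i "take (Suc k) \<alpha>" "drop (Suc k) \<alpha>"] by simp
  then show ?thesis
    using L2_exact[OF _ Rr_closed up_self_Rr, of T "take (Suc k) \<alpha>" r p pc] by simp
qed

lemma w_T_ps: assumes "k < length \<alpha>"
  shows "ps r p pc N (up r (take (Suc k) \<alpha>)) T \<le> Nk k + Ep N"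
proof -
  have "T \<notin> Rr (take (Suc k) \<alpha>)"
    using T_notin_Rr[of i "take (Suc k) \<alpha>" "drop (Suc k) \<alpha>"] by simp
  then have "ps r p pc N (up r (take (Suc k) \<alpha>)) T \<le> ps r p pc N (up r (take (Suc k) \<alpha>)) Sharp + Ep N"
    using L2_ps[OF _ Rr_closed up_self_Rr, of T "take (Suc k) \<alpha>" r p pc N] by simp
  also have "\<dots> \<le> Nk k + Ep N" by (intro add_right_mono ps_le_mht)
  finally show ?thesis .
qed

lemma Y_step: assumes k: "k < length \<alpha>"
  shows "Y k = of_nat (\<alpha> ! k - 1) * Dl r p pc +
    (1 + ennreal p * (1 + ennreal pc * Y (Suc k) + ennreal (1 - pc) * (Nk k + E)) + ennreal (1 - p) * (Nk k + E))"
proof -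
  note af = a_facts[OF k]
  let ?b = "take k \<alpha>" and ?a = "\<alpha> ! k"
  have ne: "\<alpha> \<noteq> take k \<alpha>" using k by (metis take_all_iff not_le)
  have TS: "T \<noteq> S ?a ?b" "T \<noteq> C ?a ?b" using ne by auto
  have "Y k = of_nat (?a - 1) * Dl r p pc + m (S ?a ?b) T"
    by (rule chain[OF r1 p0 p1 pc0 pc1]) (use af cond_chain[OF k] in auto)
  moreover have "m (S ?a ?b) T = 1 + ennreal p * m (C ?a ?b) T + ennreal (1 - p) * (Nk k + E)"
    using TS af w_T[OF k] k by (subst mht_step) (simp add: int_S[OF r1 p0 p1 pc0 pc1] del: K.simps)
  moreover have "m (C ?a ?b) T = 1 + ennreal pc * Y (Suc k) + ennreal (1 - pc) * (Nk k + E)"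
    using TS af w_T[OF k] k by (subst mht_step) (simp add: int_C[OF r1 p0 p1 pc0 pc1] del: K.simps)
  ultimately show ?thesis by (simp add: add.assoc)
qed

lemma Yp_step: assumes k: "k < length \<alpha>"
  shows "Yp N k \<le> of_nat (\<alpha> ! k - 1) * Dl r p pc +
    (1 + ennreal p * (1 + ennreal pc * Yp N (Suc k) + ennreal (1 - pc) * (Nk k + Ep N)) + ennreal (1 - p) * (Nk k + Ep N))"
proof -
  note af = a_facts[OF k]
  let ?b = "take k \<alpha>" and ?a = "\<alpha> ! k"
  let ?w = "up r (?b @ [?a])"
  let ?P = "\<lambda>z. ps r p pc N z T"
  have ne: "\<alpha> \<noteq> take k \<alpha>" using k by (metis take_all_iff not_le)
  have TS: "S ?a ?b \<noteq> T" "C ?a ?b \<noteq> T" using ne by auto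
  have DD: "DN r p pc N \<le> Dl r p pc"
    by (intro add_left_mono mult_left_mono ps_le_mht) auto
  have h1: "Yp N k \<le> of_nat (?a - 1) * DN r p pc N + ?P (S ?a ?b)"
    by (rule chain_ps[OF r1 p0 p1 pc0 pc1]) (use af cond_chain[OF k] in auto)
  have h5: "?P ?w \<le> Nk k + Ep N" using w_T_ps[OF k, of N] unfolding af(1) .
  have "?P (S ?a ?b) \<le> 1 + (\<integral>\<^sup>+ z. ?P z \<partial>KK r p pc (S ?a ?b))"
    by (rule ps_step_le[OF TS(1)])
  also have "(\<integral>\<^sup>+ z. ?P z \<partial>KK r p pc (S ?a ?b)) = ennreal p * ?P (C ?a ?b) + ennreal (1 - p) * ?P ?w"
    by (rule int_S[OF r1 p0 p1 pc0 pc1 af(2,3)])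
  finally have h3: "?P (S ?a ?b) \<le> 1 + (ennreal p * ?P (C ?a ?b) + ennreal (1 - p) * ?P ?w)" .
  have "?P (C ?a ?b) \<le> 1 + (\<integral>\<^sup>+ z. ?P z \<partial>KK r p pc (C ?a ?b))"
    by (rule ps_step_le[OF TS(2)])
  also have "(\<integral>\<^sup>+ z. ?P z \<partial>KK r p pc (C ?a ?b)) = ennreal pc * ?P (S 1 (?b @ [?a])) + ennreal (1 - pc) * ?P ?w"
    by (rule int_C[OF r1 p0 p1 pc0 pc1 af(2,3)])
  finally have h4: "?P (C ?a ?b) \<le> 1 + (ennreal pc * Yp N (Suc k) + ennreal (1 - pc) * ?P ?w)"
    unfolding af(1) .
  have h4': "?P (C ?a ?b) \<le> 1 + ennreal pc * Yp N (Suc k) + ennreal (1 - pc) * (Nk k + Ep N)"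
  proof -
    have "1 + (ennreal pc * Yp N (Suc k) + ennreal (1 - pc) * ?P ?w) \<le> 1 + (ennreal pc * Yp N (Suc k) + ennreal (1 - pc) * (Nk k + Ep N))"
      by (intro add_left_mono mult_left_mono h5) auto
    from order_trans[OF h4 this] show ?thesis by (simp only: add.assoc)
  qed
  have h3': "?P (S ?a ?b) \<le> 1 + ennreal p * (1 + ennreal pc * Yp N (Suc k) + ennreal (1 - pc) * (Nk k + Ep N)) + ennreal (1 - p) * (Nk k + Ep N)"
  proof -
    have "1 + (ennreal p * ?P (C ?a ?b) + ennreal (1 - p) * ?P ?w) \<le>
       1 + (ennreal p * (1 + ennreal pc * Yp N (Suc k) + ennreal (1 - pc) * (Nk k + Ep N)) + ennreal (1 - p) * (Nk k + Ep N))"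
      by (intro add_left_mono add_mono mult_left_mono h4' h5) auto
    from order_trans[OF h3 this] show ?thesis by (simp only: add.assoc)
  qed
  have "of_nat (?a - 1) * DN r p pc N + ?P (S ?a ?b) \<le> of_nat (?a - 1) * Dl r p pc +
    (1 + ennreal p * (1 + ennreal pc * Yp N (Suc k) + ennreal (1 - pc) * (Nk k + Ep N)) + ennreal (1 - p) * (Nk k + Ep N))"
    by (intro add_mono mult_left_mono DD h3') auto
  from order_trans[OF h1 this] show ?thesis .
qed


lemma conv: assumes "0 \<le> \<delta>" "0 \<le> y" "0 \<le> n" "0 \<le> e"
  shows "of_nat a' * ennreal \<delta> + (1 + ennreal p * (1 + ennreal pc * ennreal y + ennreal (1 - pc) * (ennreal n + ennreal e))
     + ennreal (1 - p) * (ennreal n + ennreal e)) = ennreal (real a' * \<delta> + 1 + p + p * pc * y + (1 - p * pc) * (n + e))"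
proof -
  have "of_nat a' * ennreal \<delta> + (1 + ennreal p * (1 + ennreal pc * ennreal y + ennreal (1 - pc) * (ennreal n + ennreal e))
     + ennreal (1 - p) * (ennreal n + ennreal e)) =
     ennreal (real a' * \<delta> + (1 + p * (1 + pc * y + (1 - pc) * (n + e)) + (1 - p) * (n + e)))"
    using assms p0 p1 pc0 pc1
    by (simp add: ennreal_mult ennreal_plus ennreal_of_nat_eq_real_of_nat)
  also have "real a' * \<delta> + (1 + p * (1 + pc * y + (1 - pc) * (n + e)) + (1 - p) * (n + e)) =
      real a' * \<delta> + 1 + p + p * pc * y + (1 - p * pc) * (n + e)"
    by (simp add: algebra_simps)
  finally show ?thesis .
qed


abbreviation "cc \<equiv> enn2real (Cc r p pc)"
abbreviation "\<delta> \<equiv> 1 + p * (1 + pc * cc)"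
abbreviation "nk k \<equiv> real (\<Sum>s<Suc k. r - \<alpha> ! s) * \<delta>"
abbreviation "bk k \<equiv> real (\<alpha> ! k - 1) * \<delta> + 1 + p + (1 - p * pc) * nk k"

lemma delta_nn: "0 \<le> \<delta>" using p0 pc0 by simp

lemma Dl_real: "Dl r p pc = ennreal \<delta>"
proof -
  have "Cc r p pc = ennreal cc" using Cc_fin[OF r1 p0 p1 pc0 pc1 rnu] by (simp add: less_top)
  then show ?thesis using p0 pc0 by (simp add: ennreal_mult ennreal_plus)
qed

lemma Nk_real: assumes k: "k < length \<alpha>" shows "Nk k = ennreal (nk k)"
proof -
  have v: "\<forall>a\<in>set (take (Suc k) \<alpha>). 1 \<le> a \<and> a \<le> r" using av by (meson in_set_takeD)
  have "Nk k = (\<Sum>s<Suc k. of_nat (r - \<alpha> ! s) * Dl r p pc)"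
    using up_Sharp[OF r1 p0 p1 pc0 pc1 v] k by simp
  also have "\<dots> = of_nat (\<Sum>s<Suc k. r - \<alpha> ! s) * ennreal \<delta>"
    unfolding Dl_real by (simp only: sum_distrib_right of_nat_sum)
  also have "\<dots> = ennreal (nk k)" using delta_nn by (simp only: ennreal_of_nat_eq_real_of_nat ennreal_mult of_nat_0_le_iff)
  finally show ?thesis .
qed

lemma Y_last_real: "Y (length \<alpha>) = ennreal (real (i - 1) * \<delta>)"
  using Y_last delta_nn unfolding Dl_real by (simp add: ennreal_of_nat_eq_real_of_nat ennreal_mult)

lemma nk_nn: "0 \<le> nk k" by (intro mult_nonneg_nonneg of_nat_0_le_iff delta_nn)

lemma E_fin: assumes nu: "0 < p * pc"
  shows "E \<le> ennreal ((1 + (\<Sum>k<length \<alpha>. (p * pc) ^ k * bk k) + (p * pc) ^ length \<alpha> * (real (i - 1) * \<delta>)) / (p * pc) ^ length \<alpha>)"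
proof -
  let ?t = "length \<alpha>" and ?\<nu> = "p * pc"
  let ?Z = "1 + (\<Sum>k<length \<alpha>. (p * pc) ^ k * bk k) + (p * pc) ^ length \<alpha> * (real (i - 1) * \<delta>)"
  have "Ep N \<le> ennreal (?Z / ?\<nu> ^ ?t)" for N
  proof -
    have fin: "ps r p pc N x y = ennreal (enn2real (ps r p pc N x y))" for x y
      using ps_fin[of r p pc N x y] by (intro ennreal_enn2real[symmetric]) (auto simp: less_top[symmetric] top_unique)
    define yp where "yp k = enn2real (Yp N k)" for k
    define ep where "ep = enn2real (Ep N)"
    have ypn: "0 \<le> yp k" for k by (simp add: yp_def)
    have epn: "0 \<le> ep" by (simp add: ep_def)
    have Yeq: "Yp N j = ennreal (yp j)" for j unfolding yp_def by (rule fin)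
    have Epeq: "Ep N = ennreal ep" unfolding ep_def by (rule fin)
    have st: "yp k \<le> bk k + ?\<nu> * yp (Suc k) + (1 - ?\<nu>) * ep" if k: "k < ?t" for k
    proof -
      have "ennreal (yp k) \<le> ennreal (real (\<alpha> ! k - 1) * \<delta> + 1 + p + p * pc * yp (Suc k) + (1 - p * pc) * (nk k + ep))"
        using Yp_step[OF k, of N] unfolding Yeq Epeq Nk_real[OF k] Dl_real conv[OF delta_nn ypn nk_nn epn] .
      then have "yp k \<le> real (\<alpha> ! k - 1) * \<delta> + 1 + p + p * pc * yp (Suc k) + (1 - p * pc) * (nk k + ep)"
        using p0 pc0 pc1 p1 delta_nn nk_nn[of k] ypn[of "Suc k"] epn
        by (subst (asm) ennreal_le_iff) (auto intro!: add_nonneg_nonneg mult_nonneg_nonneg simp: mult_le_one)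
      then show ?thesis by (simp add: algebra_simps)
    qed
    have yt: "yp ?t \<le> real (i - 1) * \<delta>"
    proof -
      have "ennreal (yp ?t) \<le> ennreal (real (i - 1) * \<delta>)"
        using ps_le_mht[of r p pc N "S 1 (take ?t \<alpha>)" T] Y_last_real unfolding Yeq by simp
      then show ?thesis using delta_nn by (subst (asm) ennreal_le_iff) auto
    qed
    have e: "ep \<le> 1 + yp 0"
    proof -
      have "ennreal ep \<le> ennreal (1 + yp 0)" using Ep_le[of N] ypn[of 0] unfolding Yeq Epeq by (simp add: ennreal_plus)
      then show ?thesis using ypn[of 0] by (subst (asm) ennreal_le_iff) auto
    qed
    have "?\<nu> ^ ?t * ep \<le> ?Z" using solve_le[of ?\<nu> ?t yp bk ep, OF _ st yt e] nu by simp
    then have "ep \<le> ?Z / ?\<nu> ^ ?t" using nu by (simp add: pos_le_divide_eq mult.commute)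
    then show ?thesis unfolding Epeq by (rule ennreal_leI)
  qed
  then show ?thesis unfolding mht_SUP by (intro SUP_least) auto
qed


lemma E_exact: assumes nu: "0 < p * pc"
  shows "E = ennreal ((1 + (\<Sum>k<length \<alpha>. (p * pc) ^ k * bk k) + (p * pc) ^ length \<alpha> * (real (i - 1) * \<delta>)) / (p * pc) ^ length \<alpha>)"
proof -
  let ?t = "length \<alpha>" and ?\<nu> = "p * pc"
  let ?Z = "1 + (\<Sum>k<length \<alpha>. (p * pc) ^ k * bk k) + (p * pc) ^ length \<alpha> * (real (i - 1) * \<delta>)"
  have pp: "0 < p" "0 < pc" using nu p0 pc0 by (auto simp: zero_less_mult_iff)
  have Efin: "E \<noteq> \<top>" using E_fin[OF nu] by (auto simp: top_unique)
  have Yfin: "k \<le> ?t \<Longrightarrow> Y k \<noteq> \<top>" for k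
  proof (induction k)
    case 0
    then show ?case using Efin E_eq by auto
  next
    case (Suc k)
    show ?case
    proof
      assume "Y (Suc k) = \<top>"
      then have "Y k = \<top>" using Y_step[of k] Suc.prems pp by (simp add: ennreal_mult_top)
      then show False using Suc by simp
    qed
  qed
  define y where "y k = enn2real (Y k)" for k
  define e where "e = enn2real E"
  have Yeq: "k \<le> ?t \<Longrightarrow> Y k = ennreal (y k)" for k
    unfolding y_def using Yfin by (simp add: less_top)
  have Eeq: "E = ennreal e" unfolding e_def using Efin by (simp add: less_top)
  have yn: "0 \<le> y k" for k by (simp add: y_def)
  have en: "0 \<le> e" by (simp add: e_def)
  have st: "y k = bk k + ?\<nu> * y (Suc k) + (1 - ?\<nu>) * e" if k: "k < ?t" for k
  proof -
    have "ennreal (y k) = ennreal (real (\<alpha> ! k - 1) * \<delta> + 1 + p + p * pc * y (Suc k) + (1 - p * pc) * (nk k + e))"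
      using Y_step[OF k] unfolding Yeq[OF less_imp_le[OF k]] Yeq[OF Suc_leI[OF k]] Eeq Nk_real[OF k] Dl_real conv[OF delta_nn yn nk_nn en] .
    then have "y k = real (\<alpha> ! k - 1) * \<delta> + 1 + p + p * pc * y (Suc k) + (1 - p * pc) * (nk k + e)"
      using p0 pc0 pc1 p1 delta_nn nk_nn[of k] yn[of "Suc k"] yn[of k] en
      by (subst (asm) ennreal_inj) (auto intro!: add_nonneg_nonneg mult_nonneg_nonneg simp: mult_le_one)
    then show ?thesis by (simp add: algebra_simps)
  qed
  have yt: "y ?t = real (i - 1) * \<delta>"
    using Y_last_real Yeq[of ?t] delta_nn yn[of ?t] by (simp add: ennreal_inj)
  have ee: "e = 1 + y 0"
  proof -
    have "ennreal e = ennreal (1 + y 0)" using E_eq Yeq[of 0] yn[of 0] unfolding Eeq by (simp add: ennreal_plus)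
    then show ?thesis using en yn[of 0] by (subst (asm) ennreal_inj) auto
  qed
  have "?\<nu> ^ ?t * e = ?Z" using solve_eq[of ?t y bk ?\<nu> e, OF st yt ee] by simp
  moreover have "?\<nu> ^ ?t \<noteq> 0" using nu by (intro power_not_zero) linarith
  ultimately have "e = ?Z / ?\<nu> ^ ?t" by (metis nonzero_mult_div_cancel_left)
  then show ?thesis unfolding Eeq by simp
qed


lemma rhs_real: assumes nu: "0 < p * pc"
  shows "inverse (ennreal (p * pc) ^ length \<alpha>) + of_nat (i - 1) * Dl r p pc
       + (\<Sum>k = 1..length \<alpha>. (1 + ennreal p + of_nat (\<alpha> ! (k - 1) - 1) * Dl r p pc
           + ennreal (1 - p * pc) * (\<Sum>s = 1..k. of_nat (r - \<alpha> ! (s - 1)) * Dl r p pc))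
          / ennreal (p * pc) ^ (length \<alpha> + 1 - k))
     = ennreal ((1 + (\<Sum>k<length \<alpha>. (p * pc) ^ k * bk k) + (p * pc) ^ length \<alpha> * (real (i - 1) * \<delta>)) / (p * pc) ^ length \<alpha>)"
proof -
  let ?t = "length \<alpha>" and ?\<nu> = "p * pc"
  have nu1: "?\<nu> \<le> 1" using p0 p1 pc0 pc1 by (simp add: mult_le_one)
  have sn: "0 \<le> (\<Sum>x<k. real (r - \<alpha> ! x))" for k by (simp add: sum_nonneg)
  have bkn: "0 \<le> bk k" for k using nk_nn[of k] delta_nn nu1 p0 pc0 sn[of k] by (intro add_nonneg_nonneg mult_nonneg_nonneg) auto
  have num: "1 + ennreal p + of_nat (\<alpha> ! k - 1) * Dl r p pc
           + ennreal (1 - p * pc) * (\<Sum>s = 1..Suc k. of_nat (r - \<alpha> ! (s - 1)) * Dl r p pc) = ennreal (bk k)" for k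
  proof -
    have "(\<Sum>s = 1..Suc k. of_nat (r - \<alpha> ! (s - 1)) * Dl r p pc) = (\<Sum>s<Suc k. of_nat (r - \<alpha> ! s) * ennreal \<delta>)"
      unfolding sum_shift1 Dl_real by simp
    also have "\<dots> = of_nat (\<Sum>s<Suc k. r - \<alpha> ! s) * ennreal \<delta>"
      by (simp only: sum_distrib_right of_nat_sum)
    also have "\<dots> = ennreal (nk k)" using delta_nn by (simp only: ennreal_of_nat_eq_real_of_nat ennreal_mult of_nat_0_le_iff)
    finally have "(\<Sum>s = 1..Suc k. of_nat (r - \<alpha> ! (s - 1)) * Dl r p pc) = ennreal (nk k)" .
    then show ?thesis unfolding Dl_real using delta_nn p0 pc0 nu1 nk_nn[of k] sn[of k]
      by (simp add: ennreal_of_nat_eq_real_of_nat ennreal_mult ennreal_plus add.assoc)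
  qed
  have trm: "(1 + ennreal p + of_nat (\<alpha> ! (Suc k - 1) - 1) * Dl r p pc
           + ennreal (1 - p * pc) * (\<Sum>s = 1..Suc k. of_nat (r - \<alpha> ! (s - 1)) * Dl r p pc))
          / ennreal (p * pc) ^ (?t + 1 - Suc k) = ennreal (bk k / ?\<nu> ^ (?t - k))" for k
    unfolding diff_Suc_1 num using nu bkn[of k] by (simp add: ennreal_power divide_ennreal)
  have "(\<Sum>k = 1..?t. (1 + ennreal p + of_nat (\<alpha> ! (k - 1) - 1) * Dl r p pc
           + ennreal (1 - p * pc) * (\<Sum>s = 1..k. of_nat (r - \<alpha> ! (s - 1)) * Dl r p pc))
          / ennreal (p * pc) ^ (?t + 1 - k)) = (\<Sum>k<?t. ennreal (bk k / ?\<nu> ^ (?t - k)))"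
    by (subst sum_shift1) (rule sum.cong[OF refl trm])
  also have "\<dots> = ennreal (\<Sum>k<?t. bk k / ?\<nu> ^ (?t - k))"
    using bkn nu by (intro sum_ennreal) (auto intro!: divide_nonneg_pos)
  finally have S: "(\<Sum>k = 1..?t. (1 + ennreal p + of_nat (\<alpha> ! (k - 1) - 1) * Dl r p pc
           + ennreal (1 - p * pc) * (\<Sum>s = 1..k. of_nat (r - \<alpha> ! (s - 1)) * Dl r p pc))
          / ennreal (p * pc) ^ (?t + 1 - k)) = ennreal (\<Sum>k<?t. bk k / ?\<nu> ^ (?t - k))" .
  have I: "inverse (ennreal (p * pc) ^ ?t) = ennreal (inverse (?\<nu> ^ ?t))"
    using nu by (simp add: ennreal_power inverse_ennreal)
  have D: "of_nat (i - 1) * Dl r p pc = ennreal (real (i - 1) * \<delta>)"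
    unfolding Dl_real using delta_nn by (simp add: ennreal_of_nat_eq_real_of_nat ennreal_mult)
  have sumn: "0 \<le> (\<Sum>k<?t. bk k / ?\<nu> ^ (?t - k))" using bkn nu by (intro sum_nonneg divide_nonneg_pos) auto
  have real_id: "inverse (?\<nu> ^ ?t) + real (i - 1) * \<delta> + (\<Sum>k<?t. bk k / ?\<nu> ^ (?t - k)) =
     (1 + (\<Sum>k<?t. ?\<nu> ^ k * bk k) + ?\<nu> ^ ?t * (real (i - 1) * \<delta>)) / ?\<nu> ^ ?t"
  proof -
    have nz: "?\<nu> ^ n \<noteq> 0" for n using nu by (intro power_not_zero) linarith
    have "(\<Sum>k<?t. ?\<nu> ^ k * bk k) / ?\<nu> ^ ?t = (\<Sum>k<?t. bk k / ?\<nu> ^ (?t - k))"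
      unfolding sum_divide_distrib
    proof (intro sum.cong refl)
      fix k assume "k \<in> {..<?t}"
      then have eq: "?\<nu> ^ ?t = ?\<nu> ^ k * ?\<nu> ^ (?t - k)" by (simp add: power_add[symmetric])
      show "?\<nu> ^ k * bk k / ?\<nu> ^ ?t = bk k / ?\<nu> ^ (?t - k)"
        unfolding eq by (rule mult_divide_mult_cancel_left[OF nz])
    qed
    then show ?thesis by (rule real_id_aux[OF nz])
  qed
  have nn1: "0 \<le> inverse (?\<nu> ^ ?t)" using nu by simp
  have nn2: "0 \<le> real (i - 1) * \<delta>" using delta_nn by simp
  have "ennreal (inverse (?\<nu> ^ ?t)) + ennreal (real (i - 1) * \<delta>) + ennreal (\<Sum>k<?t. bk k / ?\<nu> ^ (?t - k))
     = ennreal (inverse (?\<nu> ^ ?t) + real (i - 1) * \<delta> + (\<Sum>k<?t. bk k / ?\<nu> ^ (?t - k)))"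
    using ennreal_plus[OF add_nonneg_nonneg[OF nn1 nn2] sumn] ennreal_plus[OF nn1 nn2] by simp
  then show ?thesis unfolding S I D real_id .
qed


lemma zero_case: assumes "p * pc = 0" "\<alpha> \<noteq> []" shows "E = \<top>"
proof -
  define U where "U = {Sharp} \<union> range (\<lambda>j. S j []) \<union> (if p = 0 then {} else range (\<lambda>j. C j []))"
  have inU: "Sharp \<in> U" "S j [] \<in> U" "p \<noteq> 0 \<Longrightarrow> C j [] \<in> U" for j by (auto simp: U_def)
  have cl: "\<forall>z\<in>U. set_pmf (K r p pc z) \<subseteq> U"
  proof (intro ballI subsetI)
    fix z z' assume z: "z \<in> U" and z': "z' \<in> set_pmf (K r p pc z)"
    have "z = Sharp \<or> (\<exists>j. z = S j []) \<or> (\<exists>j. z = C j [] \<and> p \<noteq> 0)"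
      using z unfolding U_def by (cases "p = 0") auto
    then consider "z = Sharp" | j where "z = S j []" | j where "z = C j []" "p \<noteq> 0" by blast
    then show "z' \<in> U"
    proof cases
      case 1 then show ?thesis using z' inU by simp
    next
      case (2 j)
      have "z' = Sharp \<or> z' = S (j + 1) [] \<or> (z' = C j [] \<and> p \<noteq> 0)"
        using z' unfolding 2 by (auto dest!: bern_map_set[OF p0 p1] simp del: set_map_pmf split: if_splits)
      then show ?thesis using inU by blast
    next
      case (3 j)
      then have pc: "pc = 0" using assms(1) by simp
      have "z' = Sharp \<or> z' = S (j + 1) [] \<or> (z' = S 1 [j] \<and> pc \<noteq> 0)"
        using z' unfolding 3 by (auto dest!: bern_map_set[OF pc0 pc1] simp del: set_map_pmf split: if_splits)
      then have "z' = Sharp \<or> z' = S (j + 1) []" using pc by blast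
      then show ?thesis using inU by blast
    qed
  qed
  have "T \<notin> U" using assms(2) by (auto simp: U_def)
  then show ?thesis using trapped_mht[OF cl _ inU(1)] by blast
qed

lemma nil_case: assumes "\<alpha> = []" shows "E = 1 + of_nat (i - 1) * Dl r p pc"
  using E_eq Y_last assms by simp

end

theorem theorem3p5:
  fixes r :: nat and p pc :: real and \<alpha> :: "nat list" and i :: nat
  assumes "r \<ge> 1" and "0 \<le> p" "p \<le> 1" and "0 \<le> pc" "pc \<le> 1"
    and "p * pc * real r < 1"
    and "\<forall>a \<in> set \<alpha>. 1 \<le> a \<and> a \<le> r"
    and "1 \<le> i" "i \<le> r"
  shows "let \<nu> = ennreal (p * pc); t = length \<alpha>;
             Cc = mht r p pc (S 1 []) Sharp;
             \<Delta> = 1 + ennreal p * (1 + ennreal pc * Cc)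
         in mht r p pc Sharp (S i \<alpha>) =
              inverse (\<nu> ^ t) + of_nat (i - 1) * \<Delta>
              + (\<Sum>k = 1..t. (1 + ennreal p + of_nat (\<alpha> ! (k - 1) - 1) * \<Delta>
                    + ennreal (1 - p * pc) * (\<Sum>s = 1..k. of_nat (r - \<alpha> ! (s - 1)) * \<Delta>))
                   / \<nu> ^ (t + 1 - k))"
proof -
  note ctx = assms
  show ?thesis
  proof (cases "\<alpha> = []")
    case True
    then show ?thesis unfolding Let_def using nil_case[OF ctx] by simp
  next
    case False
    show ?thesis
    proof (cases "p * pc = 0")
      case True
      have z0: "ennreal (p * pc) = 0" by (simp add: True)
      have z1: "(0::ennreal) ^ length \<alpha> = 0" using False by simp
      show ?thesis unfolding Let_def z0 z1 using zero_case[OF ctx True False] by simp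
    next
      case nz: False
      then have pos: "0 < p * pc" using ctx(2,4) by (simp add: less_le)
      show ?thesis unfolding Let_def by (rule trans[OF E_exact[OF ctx pos] rhs_real[OF ctx pos, symmetric]])
    qed
  qed
qed


end
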